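(* Let $d=2b$ be even, $d\geq 4$, and let $q\geq b$. Then every half-edge of every $(2q,2b)$-branching mobile has even weight. Similarly, the weights of the half-edges in the minimal pseudo $d/(d-2)$-orientation of any $2q$-annular $2b$-angulation of girth $2b$ are even.
   Context: A mobile is a plane tree whose vertices are black or white (not necessarily properly), black vertices possibly carrying dangling half-edges (buds). An $\mathbb N$-mobile gives each non-bud half-edge a weight in $\{0,1,2,\dots\}$, positive if incident to a white vertex, zero if incident to a black vertex; vertex weight = sum of weights of incident non-bud half-edges; edge weight = sum of its two half-edge weights; black-vertex degree counts buds. For $p\geq d\geq 3$, a $(p,d)$-branching mobile is an $\mathbb N$-mobile such that every edge has weight $d-2$; every black vertex has degree $d$ except one black vertex $s$ (special vertex) of degree $p$ carrying no bud; every white vertex not adjacent to $s$ has weight $d$, and the weights of the neighbors of $s$ sum to $pd-p-d$. A map is a connected finite graph embedded in the oriented sphere up to orientation-preserving homeomorphism; girth is the minimal cycle length. A $p$-annular $d$-angulation is a map with a marked face (boundary face) of degree $p$ with simple contour, all other faces of degree $d$, and a marked root-face distinct from the boundary face. A biorientation assigns to each half-edge a direction (ingoing/outgoing); an edge is $i$-way if $i$ of its half-edges are ingoing; directed paths follow 2-way edges or 1-way edges toward the ingoing half-edge; a circuit (simple closed directed path) is counterclockwise if the root-face is on its right; minimal = no counterclockwise circuit. An $\mathbb N$-biorientation has half-edge weights in $\{0,1,2,\dots\}$, positive on ingoing, zero on outgoing half-edges. A pseudo $d/(d-2)$-orientation is an $\mathbb N$-biorientation with every edge of weight $d-2$, every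 vertex not incident to the boundary face of weight $d$ (vertex weight = sum of weights of incident ingoing half-edges), and the boundary face contour a directed cycle of 1-way edges each with the boundary face on its right. A $p$-annular $d$-angulation of girth $d$ has a unique minimal one. *)

theory Defs
  imports "HOL-Combinatorics.Permutations"
begin

text \<open>Half-edges (darts) form a finite set D. alpha is an involution on D pairing the two
  half-edges of an edge (for mobiles, its fixed points are exactly the buds).
  sigma is the counterclockwise rotation of half-edges around their vertex; vertices are
  sigma-orbits, and faces of a map are orbits of sigma o alpha. With this convention the
  face containing a dart x is the face lying on the right of x when x is traversed from
  its own vertex to the vertex of alpha x.\<close>

definition orb :: "('a \<Rightarrow> 'a) \<Rightarrow> 'a \<Rightarrow> 'a set" where
  "orb f x = {(f ^^ n) x | n. True}"

definition verts :: "'a set \<Rightarrow> ('a \<Rightarrow> 'a) \<Rightarrow> 'a set set" where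
  "verts D sigma = orb sigma ` D"

definition face :: "('a \<Rightarrow> 'a) \<Rightarrow> ('a \<Rightarrow> 'a) \<Rightarrow> 'a \<Rightarrow> 'a set" where
  "face alpha sigma x = orb (sigma \<circ> alpha) x"

definition faces :: "'a set \<Rightarrow> ('a \<Rightarrow> 'a) \<Rightarrow> ('a \<Rightarrow> 'a) \<Rightarrow> 'a set set" where
  "faces D alpha sigma = face alpha sigma ` D"

definition cmap_base :: "'a set \<Rightarrow> ('a \<Rightarrow> 'a) \<Rightarrow> ('a \<Rightarrow> 'a) \<Rightarrow> bool" where
  "cmap_base D alpha sigma \<longleftrightarrow>
     finite D \<and> D \<noteq> {} \<and> alpha permutes D \<and> sigma permutes D \<and>
     (\<forall>x\<in>D. alpha (alpha x) = x) \<and>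
     (\<forall>x\<in>D. \<forall>y\<in>D. (x, y) \<in> ({(z, alpha z) | z. z \<in> D} \<union> {(z, sigma z) | z. z \<in> D})\<^sup>*)"

definition is_map :: "'a set \<Rightarrow> ('a \<Rightarrow> 'a) \<Rightarrow> ('a \<Rightarrow> 'a) \<Rightarrow> bool" where
  "is_map D alpha sigma \<longleftrightarrow>
     cmap_base D alpha sigma \<and> (\<forall>x\<in>D. alpha x \<noteq> x) \<and>
     int (card (verts D sigma)) - int (card D div 2) + int (card (faces D alpha sigma)) = 2"

definition mvwt :: "('a \<Rightarrow> 'a) \<Rightarrow> ('a \<Rightarrow> nat) \<Rightarrow> 'a set \<Rightarrow> nat" where
  "mvwt alpha w v = (\<Sum>x\<in>{x\<in>v. alpha x \<noteq> x}. w x)"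

definition branching_mobile ::
  "nat \<Rightarrow> nat \<Rightarrow> 'a set \<Rightarrow> ('a \<Rightarrow> 'a) \<Rightarrow> ('a \<Rightarrow> 'a) \<Rightarrow> ('a set \<Rightarrow> bool) \<Rightarrow> ('a \<Rightarrow> nat) \<Rightarrow> bool" where
  "branching_mobile p d D alpha sigma black w \<longleftrightarrow>
     d \<le> p \<and> 3 \<le> d \<and> cmap_base D alpha sigma \<and>
     \<comment> \<open>plane tree: connected with #vertices = #edges + 1\<close>
     card (verts D sigma) = card {x\<in>D. alpha x \<noteq> x} div 2 + 1 \<and>
     \<comment> \<open>buds only at black vertices\<close>
     (\<forall>x\<in>D. alpha x = x \<longrightarrow> black (orb sigma x)) \<and>
     \<comment> \<open>N-mobile weights\<close>
     (\<forall>x\<in>D. alpha x \<noteq> x \<longrightarrow>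
        (black (orb sigma x) \<longrightarrow> w x = 0) \<and> (\<not> black (orb sigma x) \<longrightarrow> 0 < w x)) \<and>
     \<comment> \<open>every edge has weight d - 2\<close>
     (\<forall>x\<in>D. alpha x \<noteq> x \<longrightarrow> w x + w (alpha x) = d - 2) \<and>
     (\<exists>s\<in>verts D sigma. black s \<and> card s = p \<and> (\<forall>x\<in>s. alpha x \<noteq> x) \<and>
        (\<forall>v\<in>verts D sigma. black v \<and> v \<noteq> s \<longrightarrow> card v = d) \<and>
        (\<forall>v\<in>verts D sigma. \<not> black v \<and> \<not> (\<exists>x\<in>v. alpha x \<noteq> x \<and> alpha x \<in> s)
             \<longrightarrow> mvwt alpha w v = d) \<and>
        (\<Sum>v\<in>{orb sigma (alpha x) | x. x \<in> s}. mvwt alpha w v) = p * d - p - d)"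

text \<open>p-annular d-angulation with boundary face (face of bd) and root face (face of rt).\<close>
definition annular_angulation ::
  "nat \<Rightarrow> nat \<Rightarrow> 'a set \<Rightarrow> ('a \<Rightarrow> 'a) \<Rightarrow> ('a \<Rightarrow> 'a) \<Rightarrow> 'a \<Rightarrow> 'a \<Rightarrow> bool" where
  "annular_angulation p d D alpha sigma bd rt \<longleftrightarrow>
     is_map D alpha sigma \<and> bd \<in> D \<and> rt \<in> D \<and>
     card (face alpha sigma bd) = p \<and>
     inj_on (orb sigma) (face alpha sigma bd) \<and>
     (\<forall>x\<in>D. face alpha sigma x \<noteq> face alpha sigma bd \<longrightarrow> card (face alpha sigma x) = d) \<and>
     face alpha sigma rt \<noteq> face alpha sigma bd"

text \<open>A cycle: a closed walk of darts (dart x goes from the vertex of x to the vertex of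
  alpha x) with pairwise distinct vertices and pairwise distinct edges.\<close>
definition is_cycle :: "'a set \<Rightarrow> ('a \<Rightarrow> 'a) \<Rightarrow> ('a \<Rightarrow> 'a) \<Rightarrow> 'a list \<Rightarrow> bool" where
  "is_cycle D alpha sigma c \<longleftrightarrow>
     c \<noteq> [] \<and> set c \<subseteq> D \<and>
     (\<forall>i<length c. orb sigma (alpha (c ! i)) = orb sigma (c ! (Suc i mod length c))) \<and>
     distinct (map (orb sigma) c) \<and> distinct (map (\<lambda>x. {x, alpha x}) c)"

definition has_girth :: "'a set \<Rightarrow> ('a \<Rightarrow> 'a) \<Rightarrow> ('a \<Rightarrow> 'a) \<Rightarrow> nat \<Rightarrow> bool" where
  "has_girth D alpha sigma g \<longleftrightarrow>
     (\<exists>c. is_cycle D alpha sigma c \<and> length c = g) \<and>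
     (\<forall>c. is_cycle D alpha sigma c \<longrightarrow> g \<le> length c)"

definition pseudo_orientation ::
  "nat \<Rightarrow> 'a set \<Rightarrow> ('a \<Rightarrow> 'a) \<Rightarrow> ('a \<Rightarrow> 'a) \<Rightarrow> 'a \<Rightarrow> ('a \<Rightarrow> bool) \<Rightarrow> ('a \<Rightarrow> nat) \<Rightarrow> bool" where
  "pseudo_orientation d D alpha sigma bd inn w \<longleftrightarrow>
     (\<forall>x\<in>D. (inn x \<longrightarrow> 0 < w x) \<and> (\<not> inn x \<longrightarrow> w x = 0)) \<and>
     (\<forall>x\<in>D. w x + w (alpha x) = d - 2) \<and>
     (\<forall>v\<in>verts D sigma. v \<notin> orb sigma ` face alpha sigma bd \<longrightarrow>
        (\<Sum>x\<in>{x\<in>v. inn x}. w x) = d) \<and>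
     (\<forall>x\<in>face alpha sigma bd. \<not> inn x \<and> inn (alpha x))"

text \<open>Circuit: simple closed directed path; dart x can be traversed iff alpha x is ingoing.\<close>
definition is_circuit ::
  "'a set \<Rightarrow> ('a \<Rightarrow> 'a) \<Rightarrow> ('a \<Rightarrow> 'a) \<Rightarrow> ('a \<Rightarrow> bool) \<Rightarrow> 'a list \<Rightarrow> bool" where
  "is_circuit D alpha sigma inn c \<longleftrightarrow>
     is_cycle D alpha sigma c \<and> (\<forall>x\<in>set c. inn (alpha x))"

definition right_faces :: "'a set \<Rightarrow> ('a \<Rightarrow> 'a) \<Rightarrow> ('a \<Rightarrow> 'a) \<Rightarrow> 'a list \<Rightarrow> 'a set set" where
  "right_faces D alpha sigma c =
     {f. \<exists>x\<in>set c. (face alpha sigma x, f) \<in>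
        {(face alpha sigma y, face alpha sigma (alpha y)) | y.
            y \<in> D \<and> {y, alpha y} \<notin> (\<lambda>z. {z, alpha z}) ` set c}\<^sup>*}"

definition minimal_orientation ::
  "'a set \<Rightarrow> ('a \<Rightarrow> 'a) \<Rightarrow> ('a \<Rightarrow> 'a) \<Rightarrow> 'a \<Rightarrow> ('a \<Rightarrow> bool) \<Rightarrow> bool" where
  "minimal_orientation D alpha sigma rt inn \<longleftrightarrow>
     \<not> (\<exists>c. is_circuit D alpha sigma inn c \<and> face alpha sigma rt \<in> right_faces D alpha sigma c)"

end

theory Submission
  imports Defs "HOL-Combinatorics.Orbits"
begin


lemma orb_self: "x \<in> orb f x"
  unfolding orb_def by (auto intro: exI[of _ 0])

lemma orb_funpow: "(f ^^ n) x \<in> orb f x"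
  unfolding orb_def by auto

lemma orb_orbit: "permutation f \<Longrightarrow> orb f x = orbit f x"
  by (simp add: orb_def orbit_altdef_permutation)

lemma orb_subset: "f permutes D \<Longrightarrow> x \<in> D \<Longrightarrow> orb f x \<subseteq> D"
  unfolding orb_def using permutes_in_funpow_image by fastforce

lemma orb_eq: assumes "permutation f" "y \<in> orb f x" shows "orb f y = orb f x"
proof -
  have xx: "x \<in> orbit f x" using assms(1) by (rule permutation_self_in_orbit)
  have yx: "y \<in> orbit f x" using assms orb_orbit by metis
  have xy: "x \<in> orbit f y" by (rule orbit_swap[OF xx yx])
  have "orbit f y = orbit f x"
  proof
    show "orbit f y \<subseteq> orbit f x" using orbit_trans[OF _ yx] by blast
    show "orbit f x \<subseteq> orbit f y" using orbit_trans[OF _ xy] by blast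
  qed
  then show ?thesis using assms(1) by (simp add: orb_orbit)
qed

lemma orb_step: "permutation f \<Longrightarrow> orb f (f x) = orb f x"
  by (rule orb_eq) (auto simp: orb_def intro: exI[of _ 1])



inductive reach :: "('a \<Rightarrow> 'a) \<Rightarrow> ('a \<Rightarrow> 'a) \<Rightarrow> 'a set \<Rightarrow> 'a set \<Rightarrow> nat \<Rightarrow> 'a set \<Rightarrow> bool"
  for alpha sigma D s where
  r0: "reach alpha sigma D s 0 s"
| rS: "reach alpha sigma D s n (orb sigma x) \<Longrightarrow> x \<in> D \<Longrightarrow> alpha x \<noteq> x
        \<Longrightarrow> reach alpha sigma D s (Suc n) (orb sigma (alpha x))"

lemma card_pairs:
  assumes "finite N" "\<forall>x\<in>N. alpha x \<in> N \<and> alpha x \<noteq> x \<and> alpha (alpha x) = x"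
  shows "card N = 2 * card ((\<lambda>x. {x, alpha x}) ` N)"
proof -
  let ?C = "(\<lambda>x. {x, alpha x}) ` N"
  have U: "\<Union>?C = N" using assms(2) by auto
  have key: "\<And>x z. x \<in> N \<Longrightarrow> z \<in> {x, alpha x} \<Longrightarrow> {x, alpha x} = {z, alpha z}"
    using assms(2) by auto
  have pw: "pairwise disjnt ?C"
  proof (rule pairwiseI)
    fix A B assume "A \<in> ?C" "B \<in> ?C" "A \<noteq> B"
    then obtain x y where x: "x \<in> N" "A = {x, alpha x}" and y: "y \<in> N" "B = {y, alpha y}" by blast
    show "disjnt A B"
    proof (rule ccontr)
      assume "\<not> disjnt A B"
      then obtain z where "z \<in> A" "z \<in> B" unfolding disjnt_def by blast
      then have "A = {z, alpha z}" "B = {z, alpha z}" using key x y by metis+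
      then show False using \<open>A \<noteq> B\<close> by simp
    qed
  qed
  have "card (\<Union>?C) = sum card ?C"
    by (rule card_Union_disjoint[OF pw]) auto
  also have "\<dots> = sum (\<lambda>_. 2) ?C"
    by (rule sum.cong) (use assms(2) in auto)
  finally show ?thesis using U by simp
qed

lemma part1:
  assumes b2: "2 \<le> b" and M: "branching_mobile p (2*b) D alpha sigma black w"
    and x0D: "x0 \<in> D" and x0n: "alpha x0 \<noteq> x0"
  shows "even (w x0)"
proof (rule ccontr)
  assume odd0: "odd (w x0)"
  have base: "cmap_base D alpha sigma" using M unfolding branching_mobile_def by blast
  have finD: "finite D" and ap: "alpha permutes D" and sp: "sigma permutes D"
    and inv: "\<forall>x\<in>D. alpha (alpha x) = x"
    and conn: "\<forall>x\<in>D. \<forall>y\<in>D. (x, y) \<in> ({(z, alpha z) | z. z \<in> D} \<union> {(z, sigma z) | z. z \<in> D})\<^sup>*"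
    using base unfolding cmap_base_def by blast+
  have spm: "permutation sigma" unfolding permutation_permutes using finD sp by blast
  have aD: "\<And>x. x \<in> D \<Longrightarrow> alpha x \<in> D" using permutes_in_image[OF ap] by simp
  have sD: "\<And>x. x \<in> D \<Longrightarrow> sigma x \<in> D" using permutes_in_image[OF sp] by simp
  define V where "V = verts D sigma"
  define N where "N = {x\<in>D. alpha x \<noteq> x}"
  have cardV: "card V = card N div 2 + 1"
    using M unfolding branching_mobile_def V_def N_def by blast
  have bud: "\<forall>x\<in>D. alpha x = x \<longrightarrow> black (orb sigma x)"
    using M unfolding branching_mobile_def by blast
  have wt: "\<forall>x\<in>D. alpha x \<noteq> x \<longrightarrow>
        (black (orb sigma x) \<longrightarrow> w x = 0) \<and> (\<not> black (orb sigma x) \<longrightarrow> 0 < w x)"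
    using M unfolding branching_mobile_def by blast
  have ew: "\<forall>x\<in>D. alpha x \<noteq> x \<longrightarrow> w x + w (alpha x) = 2*b - 2"
    using M unfolding branching_mobile_def by blast
  have ex: "\<exists>s\<in>verts D sigma. black s \<and> card s = p \<and> (\<forall>x\<in>s. alpha x \<noteq> x) \<and>
        (\<forall>v\<in>verts D sigma. black v \<and> v \<noteq> s \<longrightarrow> card v = 2*b) \<and>
        (\<forall>v\<in>verts D sigma. \<not> black v \<and> \<not> (\<exists>x\<in>v. alpha x \<noteq> x \<and> alpha x \<in> s)
             \<longrightarrow> mvwt alpha w v = 2*b) \<and>
        (\<Sum>v\<in>{orb sigma (alpha x) | x. x \<in> s}. mvwt alpha w v) = p * (2*b) - p - 2*b"
    using M unfolding branching_mobile_def by (elim conjE) assumption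
  then obtain s where sV: "s \<in> V" and sprop: "black s \<and> card s = p \<and> (\<forall>x\<in>s. alpha x \<noteq> x) \<and>
        (\<forall>v\<in>verts D sigma. black v \<and> v \<noteq> s \<longrightarrow> card v = 2*b) \<and>
        (\<forall>v\<in>verts D sigma. \<not> black v \<and> \<not> (\<exists>x\<in>v. alpha x \<noteq> x \<and> alpha x \<in> s)
             \<longrightarrow> mvwt alpha w v = 2*b) \<and>
        (\<Sum>v\<in>{orb sigma (alpha x) | x. x \<in> s}. mvwt alpha w v) = p * (2*b) - p - 2*b"
    unfolding V_def by (rule bexE)
  from sprop have sblack: "black s" by (elim conjE)
  from sprop have white: "\<forall>v\<in>V. \<not> black v \<and> \<not> (\<exists>x\<in>v. alpha x \<noteq> x \<and> alpha x \<in> s)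
             \<longrightarrow> mvwt alpha w v = 2*b" unfolding V_def by (elim conjE) assumption
  obtain s0 where s0D: "s0 \<in> D" and s0: "s = orb sigma s0" using sV unfolding V_def verts_def by blast
  have oddpair: "\<And>x. x \<in> D \<Longrightarrow> alpha x \<noteq> x \<Longrightarrow> odd (w x) \<Longrightarrow> odd (w (alpha x))"
  proof -
    fix x assume "x \<in> D" "alpha x \<noteq> x" "odd (w x)"
    then have "w x + w (alpha x) = 2*b - 2" using ew by blast
    moreover have "even (2*b - 2)" using b2 by auto
    ultimately show "odd (w (alpha x))" using \<open>odd (w x)\<close> by (metis even_add)
  qed
  have oddwhite: "\<And>x. x \<in> D \<Longrightarrow> alpha x \<noteq> x \<Longrightarrow> odd (w x) \<Longrightarrow> \<not> black (orb sigma x)"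
    using wt by fastforce
  let ?R = "reach alpha sigma D s"
  have reachall: "\<And>y. y \<in> D \<Longrightarrow> \<exists>n. ?R n (orb sigma y)"
  proof -
    fix y assume yD: "y \<in> D"
    have "(s0, y) \<in> ({(z, alpha z) | z. z \<in> D} \<union> {(z, sigma z) | z. z \<in> D})\<^sup>*"
      using conn s0D yD by blast
    then show "\<exists>n. ?R n (orb sigma y)"
    proof (induction rule: rtrancl_induct)
      case base then show ?case using s0 reach.r0 by metis
    next
      case (step y z)
      then obtain n where n: "?R n (orb sigma y)" by blast
      from step(2) show ?case
      proof
        assume "(y, z) \<in> {(z, alpha z) | z. z \<in> D}"
        then have yD: "y \<in> D" and z: "z = alpha y" by auto
        show ?thesis
        proof (cases "alpha y = y")
          case True then show ?thesis using n z by auto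
        next
          case False then show ?thesis using reach.rS[OF n yD False] z by blast
        qed
      next
        assume "(y, z) \<in> {(z, sigma z) | z. z \<in> D}"
        then have "z = sigma y" by auto
        then show ?thesis using n orb_step[OF spm] by metis
      qed
    qed
  qed
  define dist where "dist v = (LEAST n. ?R n v)" for v
  have distR: "\<And>y. y \<in> D \<Longrightarrow> ?R (dist (orb sigma y)) (orb sigma y)"
    unfolding dist_def using reachall by (metis LeastI_ex)
  have distle: "\<And>n v. ?R n v \<Longrightarrow> dist v \<le> n"
    unfolding dist_def by (rule Least_le)
  have R0: "\<And>v. ?R 0 v \<Longrightarrow> v = s"
    by (erule reach.cases) auto
  have dist0: "\<And>y. y \<in> D \<Longrightarrow> dist (orb sigma y) = 0 \<Longrightarrow> orb sigma y = s"
    using distR R0 by metis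
  have dists: "dist s = 0" using distle[OF reach.r0] by simp
  have tri: "\<And>x. x \<in> D \<Longrightarrow> alpha x \<noteq> x \<Longrightarrow> dist (orb sigma (alpha x)) \<le> Suc (dist (orb sigma x))"
  proof -
    fix x assume "x \<in> D" "alpha x \<noteq> x"
    have "?R (Suc (dist (orb sigma x))) (orb sigma (alpha x))"
      by (rule reach.rS[OF distR[OF \<open>x \<in> D\<close>] \<open>x \<in> D\<close> \<open>alpha x \<noteq> x\<close>])
    then show "dist (orb sigma (alpha x)) \<le> Suc (dist (orb sigma x))" by (rule distle)
  qed
  have par: "\<And>y. y \<in> D \<Longrightarrow> orb sigma y \<noteq> s \<Longrightarrow>
      \<exists>x. x \<in> D \<and> alpha x \<noteq> x \<and> orb sigma (alpha x) = orb sigma y \<and>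
          Suc (dist (orb sigma x)) = dist (orb sigma y)"
  proof -
    fix y assume yD: "y \<in> D" and ns: "orb sigma y \<noteq> s"
    have r: "?R (dist (orb sigma y)) (orb sigma y)" using distR yD by blast
    then obtain n where n: "dist (orb sigma y) = Suc n"
      using R0 ns by (cases "dist (orb sigma y)") auto
    from r[unfolded n] obtain x where x: "?R n (orb sigma x)" "x \<in> D" "alpha x \<noteq> x"
      "orb sigma (alpha x) = orb sigma y"
      by (cases rule: reach.cases) auto
    have "dist (orb sigma x) \<le> n" using distle x(1) by blast
    moreover have "dist (orb sigma y) \<le> Suc (dist (orb sigma x))" using tri x by metis
    ultimately show "?thesis y" using x n by (intro exI[of _ x]) auto
  qed
  define pp where "pp v = (SOME x. x \<in> D \<and> alpha x \<noteq> x \<and> orb sigma (alpha x) = v \<and>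
          Suc (dist (orb sigma x)) = dist v)" for v
  have ppv: "\<And>v. v \<in> V \<Longrightarrow> v \<noteq> s \<Longrightarrow> pp v \<in> D \<and> alpha (pp v) \<noteq> pp v \<and>
       orb sigma (alpha (pp v)) = v \<and> Suc (dist (orb sigma (pp v))) = dist v"
  proof -
    fix v assume "v \<in> V" "v \<noteq> s"
    then obtain y where "y \<in> D" "v = orb sigma y" unfolding V_def verts_def by blast
    then have "\<exists>x. x \<in> D \<and> alpha x \<noteq> x \<and> orb sigma (alpha x) = v \<and>
          Suc (dist (orb sigma x)) = dist v" using par[of y] \<open>v \<noteq> s\<close> by blast
    then show "?thesis v" unfolding pp_def by (rule someI_ex)
  qed
  define E where "E v = {pp v, alpha (pp v)}" for v
  define Ed where "Ed = (\<lambda>x. {x, alpha x}) ` N"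
  have finN: "finite N" using finD unfolding N_def by auto
  have cN: "card N = 2 * card Ed" unfolding Ed_def
    by (rule card_pairs[OF finN]) (use inv aD in \<open>auto simp: N_def\<close>)
  have finV: "finite V" using finD unfolding V_def verts_def by auto
  have cV: "card (V - {s}) = card Ed" using cardV cN sV finV by simp
  have Esub: "E ` (V - {s}) \<subseteq> Ed"
    unfolding E_def Ed_def N_def using ppv by auto
  have Einj: "inj_on E (V - {s})"
  proof (rule inj_onI)
    fix u v assume u: "u \<in> V - {s}" and v: "v \<in> V - {s}" and e: "E u = E v"
    have pu: "pp u \<in> D \<and> alpha (pp u) \<noteq> pp u \<and>
       orb sigma (alpha (pp u)) = u \<and> Suc (dist (orb sigma (pp u))) = dist u" using ppv u by blast
    have pv: "pp v \<in> D \<and> alpha (pp v) \<noteq> pp v \<and>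
       orb sigma (alpha (pp v)) = v \<and> Suc (dist (orb sigma (pp v))) = dist v" using ppv v by blast
    from e have "pp u = pp v \<or> pp u = alpha (pp v)" unfolding E_def by (metis doubleton_eq_iff)
    then show "u = v"
    proof
      assume "pp u = pp v" then show ?thesis using pu pv by metis
    next
      assume h: "pp u = alpha (pp v)"
      then have "alpha (pp u) = pp v" using inv pv by metis
      then have "dist u = Suc (dist v)" "dist v = Suc (dist u)" using pu pv h by metis+
      then show ?thesis by simp
    qed
  qed
  have Esurj: "E ` (V - {s}) = Ed"
    using card_subset_eq[OF _ Esub] card_image[OF Einj] cV finN unfolding Ed_def by auto
  define S where "S = {v \<in> V - {s}. odd (w (pp v))}"
  have Sne: "S \<noteq> {}"
  proof -
    have "{x0, alpha x0} \<in> Ed" unfolding Ed_def N_def using x0D x0n by auto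
    then obtain u where u: "u \<in> V - {s}" "E u = {x0, alpha x0}" using Esurj by (metis imageE)
    then have "pp u = x0 \<or> pp u = alpha x0" unfolding E_def by auto
    then have "odd (w (pp u))" using odd0 oddpair x0D x0n by auto
    then show ?thesis using u unfolding S_def by blast
  qed
  have finS: "finite S" using finV unfolding S_def by auto
  obtain v where vS: "v \<in> S" and vmax: "\<forall>u\<in>S. dist u \<le> dist v"
  proof -
    have "Max (dist ` S) \<in> dist ` S" using finS Sne by simp
    then obtain v where "v \<in> S" "dist v = Max (dist ` S)" by (metis imageE)
    moreover have "\<forall>u\<in>S. dist u \<le> Max (dist ` S)" using finS by simp
    ultimately show ?thesis using that by metis
  qed
  have vV: "v \<in> V" "v \<noteq> s" and oddp: "odd (w (pp v))" using vS unfolding S_def by auto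
  have pv: "pp v \<in> D" "alpha (pp v) \<noteq> pp v"
     "orb sigma (alpha (pp v)) = v" "Suc (dist (orb sigma (pp v))) = dist v" using ppv vV by blast+
  define a where "a = alpha (pp v)"
  have aD': "a \<in> D" using aD pv a_def by blast
  have an: "alpha a \<noteq> a" using inv pv a_def by metis
  have oa: "odd (w a)" using oddpair pv oddp a_def by blast
  have av: "a \<in> v" using pv orb_self a_def by metis
  have vsub: "v \<subseteq> D" using pv orb_subset[OF sp aD'] a_def by metis
  have vorb: "\<And>y. y \<in> v \<Longrightarrow> orb sigma y = v" using orb_eq[OF spm] pv a_def by metis
  have oddset: "{y \<in> {x\<in>v. alpha x \<noteq> x}. odd (w y)} = {a}"
  proof (intro set_eqI iffI)
    fix y assume y: "y \<in> {y \<in> {x\<in>v. alpha x \<noteq> x}. odd (w y)}"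
    then have yD: "y \<in> D" and yn: "alpha y \<noteq> y" and oy: "odd (w y)" and yv: "y \<in> v"
      using vsub by auto
    have "{y, alpha y} \<in> Ed" unfolding Ed_def N_def using yD yn by auto
    then obtain u where u: "u \<in> V - {s}" "E u = {y, alpha y}" using Esurj by (metis imageE)
    have pu: "pp u \<in> D \<and> alpha (pp u) \<noteq> pp u \<and>
       orb sigma (alpha (pp u)) = u \<and> Suc (dist (orb sigma (pp u))) = dist u" using ppv u by blast
    from u(2) have "y = pp u \<or> y = alpha (pp u)" unfolding E_def by (metis doubleton_eq_iff)
    then show "y \<in> {a}"
    proof
      assume h: "y = pp u"
      then have "u \<in> S" using u oy unfolding S_def by auto
      moreover have "dist u = Suc (dist v)" using pu h vorb yv by metis
      ultimately show ?thesis using vmax by fastforce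
    next
      assume h: "y = alpha (pp u)"
      then have "u = v" using pu vorb yv by metis
      then show ?thesis using h a_def by simp
    qed
  next
    fix y assume "y \<in> {a}" then show "y \<in> {y \<in> {x\<in>v. alpha x \<noteq> x}. odd (w y)}"
      using av an oa by auto
  qed
  have finv: "finite v" using vsub finD finite_subset by blast
  have "odd (mvwt alpha w v)"
    unfolding mvwt_def using even_sum_iff[of "{x\<in>v. alpha x \<noteq> x}" w] finv oddset by auto
  have nb: "\<not> black v" using oddwhite[OF aD' an oa] pv a_def by metis
  have "\<exists>x\<in>v. alpha x \<noteq> x \<and> alpha x \<in> s"
  proof (rule ccontr)
    assume "\<not> ?thesis"
    then have "mvwt alpha w v = 2*b" using white vV nb by blast
    then show False using \<open>odd (mvwt alpha w v)\<close> by simp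
  qed
  then obtain y where yv: "y \<in> v" and yn: "alpha y \<noteq> y" and ys: "alpha y \<in> s" by blast
  have yD: "y \<in> D" using yv vsub by blast
  have "orb sigma (alpha y) = s" using orb_eq[OF spm ys[unfolded s0]] s0 by simp
  moreover have "alpha (alpha y) \<noteq> alpha y" using inv yD yn by metis
  ultimately have "dist v \<le> 1" using tri[OF aD[OF yD]] inv yD dists vorb[OF yv] by simp
  then have "dist (orb sigma (pp v)) = 0" using pv by simp
  then have "orb sigma (pp v) = s" using dist0 pv by blast
  then have "w (pp v) = 0" using wt pv sblack by blast
  then show False using oddp by simp
qed



lemma cyc_idx:
  assumes "c \<noteq> []"
  shows "(\<forall>i<length c. P (c ! i) (c ! (Suc i mod length c))) \<longleftrightarrow>
         successively P c \<and> P (last c) (hd c)"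
proof
  assume H: "\<forall>i<length c. P (c ! i) (c ! (Suc i mod length c))"
  have "successively P c"
    unfolding successively_conv_nth
  proof (intro allI impI)
    fix i assume "Suc i < length c"
    then show "P (c ! i) (c ! Suc i)" using H by (metis Suc_lessD mod_less)
  qed
  moreover have "P (last c) (hd c)"
    using H[rule_format, of "length c - 1"] assms
    by (simp add: last_conv_nth hd_conv_nth)
  ultimately show "successively P c \<and> P (last c) (hd c)" by blast
next
  assume H: "successively P c \<and> P (last c) (hd c)"
  show "\<forall>i<length c. P (c ! i) (c ! (Suc i mod length c))"
  proof (intro allI impI)
    fix i assume i: "i < length c"
    show "P (c ! i) (c ! (Suc i mod length c))"
    proof (cases "Suc i < length c")
      case True
      then have "Suc i mod length c = Suc i" by simp
      then show ?thesis using True H successively_nth[of P c i] by simp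
    next
      case False
      then have "Suc i = length c" using i by simp
      then have ii: "i = length c - 1" "Suc i mod length c = 0" by simp_all
      then show ?thesis using H assms by (simp add: last_conv_nth hd_conv_nth)
    qed
  qed
qed

lemma is_cycle_iff:
  "is_cycle D alpha sigma c \<longleftrightarrow>
     c \<noteq> [] \<and> set c \<subseteq> D \<and> successively (\<lambda>x y. orb sigma (alpha x) = orb sigma y) c \<and>
     orb sigma (alpha (last c)) = orb sigma (hd c) \<and>
     distinct (map (orb sigma) c) \<and> distinct (map (\<lambda>x. {x, alpha x}) c)"
  unfolding is_cycle_def
  using cyc_idx[of c "\<lambda>x y. orb sigma (alpha x) = orb sigma y"] by auto

lemma edge_eq: "{z, alpha z} = {y, alpha y} \<Longrightarrow> z = y \<or> (z = alpha y \<and> alpha z = y)"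
  by (auto simp: doubleton_eq_iff)

lemma epath:
  assumes "xs \<noteq> []" "successively (\<lambda>x y. orb sigma (alpha x) = orb sigma y) xs"
    "distinct (map (orb sigma) xs)" "orb sigma (alpha (last xs)) \<notin> orb sigma ` set xs"
  shows "distinct (map (\<lambda>x. {x, alpha x}) xs)"
  using assms
proof (induction xs)
  case Nil then show ?case by simp
next
  case (Cons x ys)
  show ?case
  proof (cases "ys = []")
    case True then show ?thesis by simp
  next
    case False
    have p2: "successively (\<lambda>x y. orb sigma (alpha x) = orb sigma y) ys"
      using Cons.prems(2) False by (auto simp: successively_Cons)
    have p3: "distinct (map (orb sigma) ys)" using Cons.prems(3) by simp
    have p4: "orb sigma (alpha (last ys)) \<notin> orb sigma ` set ys" using Cons.prems(4) False by auto
    have IH: "distinct (map (\<lambda>x. {x, alpha x}) ys)" using Cons.IH[OF False p2 p3 p4] .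
    have inj: "inj_on (orb sigma) (set (x # ys))" using Cons.prems(3) unfolding distinct_map by blast
    have nx: "orb sigma x \<notin> orb sigma ` set ys"
      using Cons.prems(3) unfolding list.map distinct.simps set_map by blast
    have R1: "orb sigma (alpha x) = orb sigma (hd ys)"
      using Cons.prems(2) False by (cases ys) (auto simp: successively_Cons)
    have "{x, alpha x} \<notin> (\<lambda>x. {x, alpha x}) ` set ys"
    proof
      assume "{x, alpha x} \<in> (\<lambda>x. {x, alpha x}) ` set ys"
      then obtain y where y: "y \<in> set ys" "{x, alpha x} = {y, alpha y}" by blast
      from edge_eq[OF y(2)] show False
      proof
        assume "x = y" then show False using nx y by auto
      next
        assume h: "x = alpha y \<and> alpha x = y"
        have "hd ys \<in> set ys" using False by simp
        then have "y = hd ys" using inj R1 h y(1) by (auto dest: inj_onD)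
        then obtain zs where ys: "ys = y # zs" using False by (cases ys) auto
        show False
        proof (cases "zs = []")
          case True
          then have "orb sigma (alpha (last (x # ys))) = orb sigma x" using ys h by simp
          then show False using Cons.prems(4) by simp
        next
          case False
          have "orb sigma (alpha y) = orb sigma (hd zs)"
            using Cons.prems(2) ys False by (cases zs) (auto simp: successively_Cons)
          then have "orb sigma (hd zs) = orb sigma x" using h by simp
          moreover have "hd zs \<in> set ys" using ys False by simp
          ultimately show False using nx by (metis image_eqI)
        qed
      qed
    qed
    then show ?thesis using IH unfolding list.map distinct.simps set_map by blast
  qed
qed

lemma ecyc:
  assumes "c \<noteq> []" "successively (\<lambda>x y. orb sigma (alpha x) = orb sigma y) c"
    "orb sigma (alpha (last c)) = orb sigma (hd c)"
    "distinct (map (orb sigma) c)" "length c = 2 \<longrightarrow> c ! 1 \<noteq> alpha (c ! 0)"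
  shows "distinct (map (\<lambda>x. {x, alpha x}) c)"
proof -
  obtain bs l where c: "c = bs @ [l]" using assms(1) by (metis append_butlast_last_id)
  show ?thesis
  proof (cases "bs = []")
    case True then show ?thesis using c by simp
  next
    case bsne: False
    have sb: "successively (\<lambda>x y. orb sigma (alpha x) = orb sigma y) bs"
      and Rl: "orb sigma (alpha (last bs)) = orb sigma l"
      using assms(2) c bsne by (auto simp: successively_append_iff)
    have db: "distinct (map (orb sigma) bs)" and nl: "orb sigma l \<notin> orb sigma ` set bs"
      using assms(4) c by auto
    have inj: "inj_on (orb sigma) (set bs)" using db unfolding distinct_map by blast
    have Eb: "distinct (map (\<lambda>x. {x, alpha x}) bs)"
      by (rule epath[OF bsne sb db]) (use Rl nl in simp)
    have hdc: "hd c = hd bs" using c bsne by simp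
    have "{l, alpha l} \<notin> (\<lambda>x. {x, alpha x}) ` set bs"
    proof
      assume "{l, alpha l} \<in> (\<lambda>x. {x, alpha x}) ` set bs"
      then obtain y where y: "y \<in> set bs" "{l, alpha l} = {y, alpha y}" by blast
      from edge_eq[OF y(2)] show False
      proof
        assume "l = y" then show False using nl y by auto
      next
        assume h: "l = alpha y \<and> alpha l = y"
        have "hd bs \<in> set bs" using bsne by simp
        moreover have "orb sigma y = orb sigma (hd bs)"
        proof -
          have "orb sigma (alpha l) = orb sigma (hd bs)" using assms(3) hdc c by simp
          then show ?thesis using h by metis
        qed
        ultimately have yh: "y = hd bs" using inj y(1) by (auto dest: inj_onD)
        then obtain zs where bs: "bs = y # zs" using bsne by (cases bs) auto
        show False
        proof (cases "zs = []")
          case True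
          then have "c = [y, l]" using c bs by simp
          then show False using assms(5) h by simp
        next
          case False
          have "orb sigma (alpha y) = orb sigma (hd zs)"
            using sb bs False by (cases zs) (auto simp: successively_Cons)
          then have "orb sigma (hd zs) = orb sigma l" using h by simp
          moreover have "hd zs \<in> set bs" using bs False by simp
          ultimately show False using nl by (metis image_eqI)
        qed
      qed
    qed
    then show ?thesis using Eb unfolding c map_append distinct_append list.map set_map by auto
  qed
qed

lemma succ_rev:
  assumes "successively (\<lambda>x y. orb sigma (alpha x) = orb sigma y) xs"
    "\<forall>x\<in>set xs. alpha (alpha x) = x"
  shows "successively (\<lambda>x y. orb sigma (alpha x) = orb sigma y) (rev (map alpha xs))"
  unfolding successively_rev successively_map
  by (rule successively_mono[OF assms(1)]) (use assms(2) in auto)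

lemma ends_list:
  assumes "successively (\<lambda>x y. orb sigma (alpha x) = orb sigma y) xs" "xs \<noteq> []"
  shows "map (\<lambda>x. orb sigma (alpha x)) xs = tl (map (orb sigma) xs) @ [orb sigma (alpha (last xs))]"
  using assms
proof (induction xs)
  case Nil then show ?case by simp
next
  case (Cons x ys)
  show ?case
  proof (cases "ys = []")
    case True then show ?thesis by simp
  next
    case False
    have "orb sigma (alpha x) = orb sigma (hd ys)"
      using Cons.prems False by (cases ys) (auto simp: successively_Cons)
    moreover have "map (\<lambda>x. orb sigma (alpha x)) ys = tl (map (orb sigma) ys) @ [orb sigma (alpha (last ys))]"
      using Cons False by (auto simp: successively_Cons)
    ultimately show ?thesis using False by (cases ys) auto
  qed
qed

lemma rev_cycle:
  assumes "is_cycle D alpha sigma c" "alpha permutes D" "\<forall>x\<in>D. alpha (alpha x) = x"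
  shows "is_cycle D alpha sigma (rev (map alpha c))"
proof -
  let ?R = "\<lambda>x y. orb sigma (alpha x) = orb sigma y"
  have c: "c \<noteq> []" "set c \<subseteq> D" "successively ?R c" "orb sigma (alpha (last c)) = orb sigma (hd c)"
     "distinct (map (orb sigma) c)" "distinct (map (\<lambda>x. {x, alpha x}) c)"
    using assms(1) unfolding is_cycle_iff by blast+
  have inv: "\<forall>x\<in>set c. alpha (alpha x) = x" using assms(3) c(2) by blast
  have s: "successively ?R (rev (map alpha c))" using succ_rev[OF c(3) inv] .
  have setD: "set (rev (map alpha c)) \<subseteq> D" using c(2) permutes_in_image[OF assms(2)] by auto
  have cl: "orb sigma (alpha (last (rev (map alpha c)))) = orb sigma (hd (rev (map alpha c)))"
    using c(1,4) inv by (simp add: last_rev hd_rev hd_map last_map)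
  have "map (orb sigma) (rev (map alpha c)) = rev (map (\<lambda>x. orb sigma (alpha x)) c)" by (simp add: rev_map)
  also have "\<dots> = rev (tl (map (orb sigma) c) @ [orb sigma (hd c)])"
    using ends_list[OF c(3,1)] c(4) by simp
  finally have mo: "map (orb sigma) (rev (map alpha c)) = rev (tl (map (orb sigma) c) @ [orb sigma (hd c)])" .
  have "distinct (tl (map (orb sigma) c) @ [orb sigma (hd c)])"
  proof -
    have "map (orb sigma) c = orb sigma (hd c) # tl (map (orb sigma) c)" using c(1) by (cases c) auto
    then show ?thesis using c(5) by (metis distinct.simps(2) distinct1_rotate rotate1.simps(2))
  qed
  then have d1: "distinct (map (orb sigma) (rev (map alpha c)))" using mo by simp
  have "map (\<lambda>x. {x, alpha x}) (rev (map alpha c)) = rev (map (\<lambda>x. {x, alpha x}) c)"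
    using inv by (induction c) (auto simp: insert_commute)
  then have d2: "distinct (map (\<lambda>x. {x, alpha x}) (rev (map alpha c)))" using c(6) by simp
  show ?thesis unfolding is_cycle_iff using c(1) s setD cl d1 d2 by simp
qed

lemma orbit_list:
  assumes "permutation f"
  shows "\<exists>n>0. (f ^^ n) x = x \<and> card (orb f x) = n \<and> inj_on (\<lambda>j. (f ^^ j) x) {0..<n} \<and>
          orb f x = (\<lambda>j. (f ^^ j) x) ` {0..<n}"
proof -
  have xx: "x \<in> orbit f x" using assms by (rule permutation_self_in_orbit)
  let ?n = "funpow_dist1 f x x"
  have "(f ^^ ?n) x = x" using funpow_dist1_prop[OF xx] .
  moreover have inj: "inj_on (\<lambda>j. (f ^^ j) x) {0..<?n}" using inj_on_funpow_dist1[OF xx] .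
  moreover have eq: "orb f x = (\<lambda>j. (f ^^ j) x) ` {0..<?n}"
    using orbit_conv_funpow_dist1[OF xx] orb_orbit[OF assms] by simp
  moreover have "card (orb f x) = ?n" using eq card_image[OF inj] by simp
  ultimately show ?thesis by (intro exI[of _ ?n]) auto
qed

lemma cover:
  assumes base: "cmap_base D alpha sigma"
    and c1: "set c1 \<subseteq> D" "c1 \<noteq> []" and c2: "set c2 \<subseteq> D"
    and H: "\<And>z. z \<in> D \<Longrightarrow> {z, alpha z} \<in> (\<lambda>x. {x, alpha x}) ` set c1 \<union> (\<lambda>x. {x, alpha x}) ` set c2
              \<Longrightarrow> face alpha sigma (alpha z) \<in> right_faces D alpha sigma c1 \<union> right_faces D alpha sigma c2"
    and zD: "z \<in> D"
  shows "face alpha sigma z \<in> right_faces D alpha sigma c1 \<union> right_faces D alpha sigma c2"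
proof -
  have finD: "finite D" and ap: "alpha permutes D" and sp: "sigma permutes D"
    and inv: "\<forall>x\<in>D. alpha (alpha x) = x"
    and conn: "\<forall>x\<in>D. \<forall>y\<in>D. (x, y) \<in> ({(z, alpha z) | z. z \<in> D} \<union> {(z, sigma z) | z. z \<in> D})\<^sup>*"
    using base unfolding cmap_base_def by blast+
  have fp: "permutation (sigma \<circ> alpha)"
    unfolding permutation_permutes using finD permutes_compose[OF ap sp] by blast
  let ?RF = "right_faces D alpha sigma c1 \<union> right_faces D alpha sigma c2"
  have astep: "\<And>z. z \<in> D \<Longrightarrow> face alpha sigma z \<in> ?RF \<Longrightarrow> face alpha sigma (alpha z) \<in> ?RF"
  proof -
    fix z assume zD: "z \<in> D" and fz: "face alpha sigma z \<in> ?RF"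
    show "face alpha sigma (alpha z) \<in> ?RF"
    proof (cases "{z, alpha z} \<in> (\<lambda>x. {x, alpha x}) ` set c1 \<union> (\<lambda>x. {x, alpha x}) ` set c2")
      case True then show ?thesis using H zD by blast
    next
      case False
      from fz show ?thesis
      proof
        assume "face alpha sigma z \<in> right_faces D alpha sigma c1"
        then obtain x where x: "x \<in> set c1" "(face alpha sigma x, face alpha sigma z) \<in>
           {(face alpha sigma y, face alpha sigma (alpha y)) | y.
            y \<in> D \<and> {y, alpha y} \<notin> (\<lambda>z. {z, alpha z}) ` set c1}\<^sup>*"
          unfolding right_faces_def by blast
        have "(face alpha sigma z, face alpha sigma (alpha z)) \<in>
           {(face alpha sigma y, face alpha sigma (alpha y)) | y.
            y \<in> D \<and> {y, alpha y} \<notin> (\<lambda>z. {z, alpha z}) ` set c1}"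
          using zD False by blast
        then have "(face alpha sigma x, face alpha sigma (alpha z)) \<in>
           {(face alpha sigma y, face alpha sigma (alpha y)) | y.
            y \<in> D \<and> {y, alpha y} \<notin> (\<lambda>z. {z, alpha z}) ` set c1}\<^sup>*"
          by (rule rtrancl.rtrancl_into_rtrancl[OF x(2)])
        then have "face alpha sigma (alpha z) \<in> right_faces D alpha sigma c1"
          unfolding right_faces_def using x(1) by blast
        then show ?thesis by blast
      next
        assume "face alpha sigma z \<in> right_faces D alpha sigma c2"
        then obtain x where x: "x \<in> set c2" "(face alpha sigma x, face alpha sigma z) \<in>
           {(face alpha sigma y, face alpha sigma (alpha y)) | y.
            y \<in> D \<and> {y, alpha y} \<notin> (\<lambda>z. {z, alpha z}) ` set c2}\<^sup>*"
          unfolding right_faces_def by blast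
        have "(face alpha sigma z, face alpha sigma (alpha z)) \<in>
           {(face alpha sigma y, face alpha sigma (alpha y)) | y.
            y \<in> D \<and> {y, alpha y} \<notin> (\<lambda>z. {z, alpha z}) ` set c2}"
          using zD False by blast
        then have "(face alpha sigma x, face alpha sigma (alpha z)) \<in>
           {(face alpha sigma y, face alpha sigma (alpha y)) | y.
            y \<in> D \<and> {y, alpha y} \<notin> (\<lambda>z. {z, alpha z}) ` set c2}\<^sup>*"
          by (rule rtrancl.rtrancl_into_rtrancl[OF x(2)])
        then have "face alpha sigma (alpha z) \<in> right_faces D alpha sigma c2"
          unfolding right_faces_def using x(1) by blast
        then show ?thesis by blast
      qed
    qed
  qed
  have sface: "\<And>z. z \<in> D \<Longrightarrow> face alpha sigma (sigma z) = face alpha sigma (alpha z)"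
  proof -
    fix z assume "z \<in> D"
    then have "sigma z = (sigma \<circ> alpha) (alpha z)" using inv by simp
    then show "face alpha sigma (sigma z) = face alpha sigma (alpha z)"
      unfolding face_def using orb_step[OF fp] by metis
  qed
  define z0 where "z0 = hd c1"
  have z0: "z0 \<in> set c1" using c1 z0_def by simp
  then have z0D: "z0 \<in> D" using c1 by blast
  have f0: "face alpha sigma z0 \<in> ?RF" using z0 unfolding right_faces_def by blast
  have "(z0, z) \<in> ({(z, alpha z) | z. z \<in> D} \<union> {(z, sigma z) | z. z \<in> D})\<^sup>*"
    using conn z0D zD by blast
  then show ?thesis
  proof (induction rule: rtrancl_induct)
    case base then show ?case using f0 .
  next
    case (step y z)
    from step(2) show ?case
    proof
      assume "(y, z) \<in> {(z, alpha z) | z. z \<in> D}"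
      then show ?thesis using astep step(3) by blast
    next
      assume "(y, z) \<in> {(z, sigma z) | z. z \<in> D}"
      then have "y \<in> D" "z = sigma y" by auto
      then show ?thesis using astep step(3) sface by metis
    qed
  qed
qed



lemma rf_start: "x \<in> set c \<Longrightarrow> face alpha sigma x \<in> right_faces D alpha sigma c"
  unfolding right_faces_def by blast

lemma rf_step:
  assumes "face alpha sigma z \<in> right_faces D alpha sigma c" "z \<in> D"
    "{z, alpha z} \<notin> (\<lambda>x. {x, alpha x}) ` set c"
  shows "face alpha sigma (alpha z) \<in> right_faces D alpha sigma c"
proof -
  let ?Rel = "{(face alpha sigma y, face alpha sigma (alpha y)) | y.
            y \<in> D \<and> {y, alpha y} \<notin> (\<lambda>z. {z, alpha z}) ` set c}"
  obtain x where x: "x \<in> set c" "(face alpha sigma x, face alpha sigma z) \<in> ?Rel\<^sup>*"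
    using assms(1) unfolding right_faces_def by blast
  have "(face alpha sigma z, face alpha sigma (alpha z)) \<in> ?Rel" using assms(2,3) by blast
  then have "(face alpha sigma x, face alpha sigma (alpha z)) \<in> ?Rel\<^sup>*"
    by (rule rtrancl.rtrancl_into_rtrancl[OF x(2)])
  then show ?thesis unfolding right_faces_def using x(1) by blast
qed

lemma two_circuits:
  assumes base: "cmap_base D alpha sigma" and rtD: "rt \<in> D"
    and MO: "minimal_orientation D alpha sigma rt inn"
    and c1: "is_circuit D alpha sigma inn c1" and c2: "is_circuit D alpha sigma inn c2"
    and H: "\<And>z. z \<in> D \<Longrightarrow> {z, alpha z} \<in> (\<lambda>x. {x, alpha x}) ` set c1 \<union> (\<lambda>x. {x, alpha x}) ` set c2
              \<Longrightarrow> face alpha sigma (alpha z) \<in> right_faces D alpha sigma c1 \<union> right_faces D alpha sigma c2"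
  shows False
proof -
  have "c1 \<noteq> []" "set c1 \<subseteq> D" "set c2 \<subseteq> D"
    using c1 c2 unfolding is_circuit_def is_cycle_def by blast+
  then have "face alpha sigma rt \<in> right_faces D alpha sigma c1 \<union> right_faces D alpha sigma c2"
    using cover[OF base _ _ _ H rtD] by blast
  then show False using MO c1 c2 unfolding minimal_orientation_def by blast
qed



lemma map_edge_rev:
  "\<forall>x\<in>set xs. alpha (alpha x) = x \<Longrightarrow>
    map (\<lambda>x. {x, alpha x}) (rev (map alpha xs)) = rev (map (\<lambda>x. {x, alpha x}) xs)"
  by (induction xs) (auto simp: insert_commute)

lemma part2:
  assumes b2: "2 \<le> b" and qb: "b \<le> q"
    and AA: "annular_angulation (2*q) (2*b) D alpha sigma bd rt"
    and PO: "pseudo_orientation (2*b) D alpha sigma bd inn w"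
    and MO: "minimal_orientation D alpha sigma rt inn"
    and zD: "z \<in> D"
  shows "even (w z)"
proof (rule ccontr)
  assume oddz: "odd (w z)"
  have ismap: "is_map D alpha sigma" and bdD: "bd \<in> D" and rtD: "rt \<in> D"
    and cardF: "card (face alpha sigma bd) = 2*q"
    and injF: "inj_on (orb sigma) (face alpha sigma bd)"
    using AA unfolding annular_angulation_def by blast+
  have base: "cmap_base D alpha sigma" and noloop: "\<forall>x\<in>D. alpha x \<noteq> x"
    using ismap unfolding is_map_def by blast+
  have finD: "finite D" and ap: "alpha permutes D" and sp: "sigma permutes D"
    and inv: "\<forall>x\<in>D. alpha (alpha x) = x"
    using base unfolding cmap_base_def by blast+
  have P1: "\<forall>x\<in>D. (inn x \<longrightarrow> 0 < w x) \<and> (\<not> inn x \<longrightarrow> w x = 0)"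
    and P2: "\<forall>x\<in>D. w x + w (alpha x) = 2*b - 2"
    and P3: "\<forall>v\<in>verts D sigma. v \<notin> orb sigma ` face alpha sigma bd \<longrightarrow>
        (\<Sum>x\<in>{x\<in>v. inn x}. w x) = 2*b"
    and P4: "\<forall>x\<in>face alpha sigma bd. \<not> inn x \<and> inn (alpha x)"
    using PO unfolding pseudo_orientation_def by blast+
  have spm: "permutation sigma" unfolding permutation_permutes using finD sp by blast
  have fpp: "(sigma \<circ> alpha) permutes D" using permutes_compose[OF ap sp] .
  have fp: "permutation (sigma \<circ> alpha)" unfolding permutation_permutes using finD fpp by blast
  have aD: "\<And>x. x \<in> D \<Longrightarrow> alpha x \<in> D" using permutes_in_image[OF ap] by simp
  define F where "F = face alpha sigma bd"
  define B where "B = orb sigma ` F"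
  define Od where "Od = {x\<in>D. odd (w x)}"
  define V where "V = verts D sigma"
  let ?R = "\<lambda>x y. orb sigma (alpha x) = orb sigma y"
  let ?E = "\<lambda>x. {x, alpha x}"
  have FD: "F \<subseteq> D" unfolding F_def face_def using orb_subset[OF fpp bdD] .
  have faceF: "\<And>y. y \<in> F \<Longrightarrow> face alpha sigma y = F"
    unfolding F_def face_def using orb_eq[OF fp] by blast
  have ev: "even (2*b - 2)" using b2 by auto
  have O1: "\<And>x. x \<in> Od \<Longrightarrow> alpha x \<in> Od"
  proof -
    fix x assume "x \<in> Od"
    then have "x \<in> D" "odd (w x)" unfolding Od_def by auto
    then have "odd (w (alpha x))" using P2 ev by (metis even_add)
    then show "alpha x \<in> Od" using aD \<open>x \<in> D\<close> unfolding Od_def by auto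
  qed
  have OD: "Od \<subseteq> D" unfolding Od_def by auto
  have O2: "\<And>x. x \<in> Od \<Longrightarrow> inn x"
    using P1 unfolding Od_def by fastforce
  have O3: "\<And>y. y \<in> F \<Longrightarrow> y \<notin> Od \<and> alpha y \<notin> Od"
  proof -
    fix y assume yF: "y \<in> F"
    then have yD: "y \<in> D" using FD by blast
    have "\<not> inn y" using P4 yF unfolding F_def by blast
    then have "w y = 0" using P1 yD by blast
    then have "w (alpha y) = 2*b - 2" using P2[rule_format, OF yD] by simp
    then show "y \<notin> Od \<and> alpha y \<notin> Od" using \<open>w y = 0\<close> ev unfolding Od_def by auto
  qed
  have O4: "\<And>x. x \<in> Od \<Longrightarrow> orb sigma (alpha x) \<notin> B \<Longrightarrow>
      \<exists>y\<in>Od. orb sigma y = orb sigma (alpha x) \<and> y \<noteq> alpha x"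
  proof -
    fix x assume xO: "x \<in> Od" and nB: "orb sigma (alpha x) \<notin> B"
    define a where "a = alpha x"
    define v where "v = orb sigma a"
    have aO: "a \<in> Od" using O1 xO a_def by blast
    have aD': "a \<in> D" using aO OD by blast
    have vV: "v \<in> verts D sigma" unfolding verts_def v_def using aD' by blast
    have vsub: "v \<subseteq> D" unfolding v_def using orb_subset[OF sp aD'] .
    have finv: "finite v" using vsub finD finite_subset by blast
    have s1: "(\<Sum>x\<in>{x\<in>v. inn x}. w x) = 2*b" using P3 vV nB unfolding B_def F_def v_def a_def by blast
    have "(\<Sum>x\<in>{x\<in>v. inn x}. w x) = (\<Sum>x\<in>v. w x)"
      by (rule sum.mono_neutral_left) (use finv vsub P1 in fastforce)+
    then have "(\<Sum>x\<in>v. w x) = 2*b" using s1 by simp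
    then have "even (\<Sum>x\<in>v. w x)" by (metis dvd_triv_left)
    then have ec: "even (card {y\<in>v. odd (w y)})" using even_sum_iff[OF finv, of w] by blast
    have av: "a \<in> {y\<in>v. odd (w y)}" using aO orb_self unfolding Od_def v_def by fastforce
    have "{y\<in>v. odd (w y)} \<noteq> {a}" using ec by auto
    then obtain y where y: "y \<in> v" "odd (w y)" "y \<noteq> a" using av by blast
    have "y \<in> Od" using y vsub unfolding Od_def by auto
    moreover have "orb sigma y = v" unfolding v_def using orb_eq[OF spm] y(1) v_def by blast
    ultimately show "\<exists>y\<in>Od. orb sigma y = orb sigma (alpha x) \<and> y \<noteq> alpha x"
      using y(3) unfolding a_def v_def by blast
  qed
  have circ: "\<And>c. is_cycle D alpha sigma c \<Longrightarrow> (\<forall>x\<in>set c. inn (alpha x)) \<Longrightarrow> is_circuit D alpha sigma inn c"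
    unfolding is_circuit_def by blast
  have zO: "z \<in> Od" using zD oddz unfolding Od_def by blast
  define x0 where "x0 = (if \<exists>x\<in>Od. orb sigma x \<in> B then SOME x. x \<in> Od \<and> orb sigma x \<in> B else z)"
  have x0O: "x0 \<in> Od" and x0B: "(\<exists>x\<in>Od. orb sigma x \<in> B) \<longrightarrow> orb sigma x0 \<in> B"
  proof -
    show "x0 \<in> Od"
    proof (cases "\<exists>x\<in>Od. orb sigma x \<in> B")
      case True then show ?thesis unfolding x0_def by simp (metis (mono_tags, lifting) someI_ex)
    next
      case False then show ?thesis unfolding x0_def using zO by simp
    qed
    show "(\<exists>x\<in>Od. orb sigma x \<in> B) \<longrightarrow> orb sigma x0 \<in> B"
    proof
      assume h: "\<exists>x\<in>Od. orb sigma x \<in> B"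
      then have "\<exists>x. x \<in> Od \<and> orb sigma x \<in> B" by blast
      then have "(SOME x. x \<in> Od \<and> orb sigma x \<in> B) \<in> Od \<and> orb sigma (SOME x. x \<in> Od \<and> orb sigma x \<in> B) \<in> B"
        by (rule someI_ex)
      then show "orb sigma x0 \<in> B" unfolding x0_def using h by simp
    qed
  qed
  define gp where "gp xs \<longleftrightarrow> xs \<noteq> [] \<and> set xs \<subseteq> Od \<and> successively ?R xs \<and> distinct (map (orb sigma) xs) \<and>
     (\<forall>x\<in>set (tl xs). orb sigma x \<notin> B) \<and> successively (\<lambda>x y. y \<noteq> alpha x) xs \<and> hd xs = x0" for xs
  have gp0: "gp [x0]" unfolding gp_def using x0O by simp
  have finV: "finite V" using finD unfolding V_def verts_def by auto
  have bound: "\<forall>ys. gp ys \<longrightarrow> length ys < Suc (card V)"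
  proof (intro allI impI)
    fix ys assume "gp ys"
    then have d: "distinct (map (orb sigma) ys)" and s: "set ys \<subseteq> Od" unfolding gp_def by blast+
    have "set (map (orb sigma) ys) \<subseteq> V" using s OD unfolding V_def verts_def by auto
    then have "card (set (map (orb sigma) ys)) \<le> card V" using finV card_mono by blast
    then show "length ys < Suc (card V)" using distinct_card[OF d] by simp
  qed
  obtain P where gpP: "gp P" and Pmax: "\<forall>ys. gp ys \<longrightarrow> length ys \<le> length P"
    using ex_has_greatest_nat[of gp "[x0]" length "Suc (card V)"] gp0 bound by blast
  have Pne: "P \<noteq> []" and PO': "set P \<subseteq> Od" and sP: "successively ?R P"
    and dP: "distinct (map (orb sigma) P)" and tlP: "\<forall>x\<in>set (tl P). orb sigma x \<notin> B"
    and nbP: "successively (\<lambda>x y. y \<noteq> alpha x) P" and hdP: "hd P = x0"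
    using gpP unfolding gp_def by blast+
  define e where "e = orb sigma (alpha (last P))"
  have lastO: "last P \<in> Od" using Pne PO' last_in_set by blast
  have alO: "alpha (last P) \<in> Od" using O1 lastO by blast
  show False
  proof (cases "e \<in> orb sigma ` set P")
    case True
    then obtain i where i: "i < length P" "orb sigma (P ! i) = e"
      by (metis imageE in_set_conv_nth)
    define c where "c = drop i P"
    have cne: "c \<noteq> []" using i unfolding c_def by simp
    have cO: "set c \<subseteq> Od" using PO' set_drop_subset unfolding c_def by fastforce
    have cD: "set c \<subseteq> D" using cO OD by blast
    have sc: "successively ?R c"
      using sP unfolding c_def by (metis append_take_drop_id successively_append_iff)
    have nbc: "successively (\<lambda>x y. y \<noteq> alpha x) c"
      using nbP unfolding c_def by (metis append_take_drop_id successively_append_iff)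
    have lc: "last c = last P" unfolding c_def using i by (simp add: last_drop)
    have hc: "hd c = P ! i" unfolding c_def using i by (simp add: hd_drop_conv_nth)
    have clc: "orb sigma (alpha (last c)) = orb sigma (hd c)" using lc hc i e_def by simp
    have dc: "distinct (map (orb sigma) c)" unfolding c_def using dP by (metis distinct_drop drop_map)
    have l2: "length c = 2 \<longrightarrow> c ! 1 \<noteq> alpha (c ! 0)"
      using successively_nth[OF nbc, of 0] by auto
    have ec: "distinct (map ?E c)" using ecyc[OF cne sc clc dc l2] .
    have cyc: "is_cycle D alpha sigma c" unfolding is_cycle_iff using cne cD sc clc dc ec by blast
    have cc: "is_circuit D alpha sigma inn c" using circ[OF cyc] O1 O2 cO by blast
    define rc where "rc = rev (map alpha c)"
    have rcyc: "is_cycle D alpha sigma rc" unfolding rc_def using rev_cycle[OF cyc ap inv] .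
    have setrc: "set rc = alpha ` set c" unfolding rc_def by simp
    have rcc: "is_circuit D alpha sigma inn rc"
    proof (rule circ[OF rcyc], intro ballI)
      fix x assume "x \<in> set rc"
      then obtain y where "y \<in> set c" "x = alpha y" using setrc by blast
      then show "inn (alpha x)" using inv cD cO O2 by (metis subsetD)
    qed
    show False
    proof (rule two_circuits[OF base rtD MO cc rcc])
      fix z' assume z'D: "z' \<in> D" and Ez: "{z', alpha z'} \<in> ?E ` set c \<union> ?E ` set rc"
      then obtain y where y: "y \<in> set c \<union> set rc" "{z', alpha z'} = {y, alpha y}" by blast
      have "alpha z' \<in> set c \<union> set rc"
      proof -
        from edge_eq[OF y(2)] show ?thesis
        proof
          assume "z' = y"
          then show ?thesis using y(1) setrc inv cD by (metis UnE UnI1 UnI2 image_eqI image_iff subsetD)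
        next
          assume "z' = alpha y \<and> alpha z' = y" then show ?thesis using y(1) by metis
        qed
      qed
      then show "face alpha sigma (alpha z') \<in> right_faces D alpha sigma c \<union> right_faces D alpha sigma rc"
        using rf_start[of "alpha z'" c alpha sigma D] rf_start[of "alpha z'" rc alpha sigma D] by blast
    qed
  next
    case eP: False
    show False
    proof (cases "e \<in> B")
      case False
      then obtain y where y: "y \<in> Od" "orb sigma y = e" "y \<noteq> alpha (last P)"
        using O4[OF lastO] e_def by blast
      have "gp (P @ [y])"
        unfolding gp_def
      proof (intro conjI)
        show "P @ [y] \<noteq> []" by simp
        show "set (P @ [y]) \<subseteq> Od" using PO' y by simp
        show "successively ?R (P @ [y])" using sP y Pne e_def by (simp add: successively_append_iff)
        show "distinct (map (orb sigma) (P @ [y]))" using dP eP y by auto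
        show "\<forall>x\<in>set (tl (P @ [y])). orb sigma x \<notin> B" using tlP Pne y False by auto
        show "successively (\<lambda>x y. y \<noteq> alpha x) (P @ [y])"
          using nbP y Pne by (simp add: successively_append_iff)
        show "hd (P @ [y]) = x0" using hdP Pne by simp
      qed
      then show False using Pmax by fastforce
    next
      case eB: True
      have "orb sigma x0 \<in> B" using x0B alO eB e_def by blast
      then obtain y0 where y0F: "y0 \<in> F" and y0u: "orb sigma y0 = orb sigma x0" unfolding B_def by blast
      obtain y1 where y1F: "y1 \<in> F" and y1e: "orb sigma y1 = e" using eB unfolding B_def by blast
      have x0P: "x0 \<in> set P" using hdP Pne hd_in_set by blast
      have ue: "orb sigma y0 \<noteq> e" using y0u x0P eP by blast
      define f where "f = sigma \<circ> alpha"
      have fy0: "face alpha sigma y0 = F" using faceF y0F .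
      obtain n where n0: "0 < n" and fn: "(f ^^ n) y0 = y0" and cn: "card (orb f y0) = n"
        and injn: "inj_on (\<lambda>j. (f ^^ j) y0) {0..<n}" and on: "orb f y0 = (\<lambda>j. (f ^^ j) y0) ` {0..<n}"
        using orbit_list[OF fp, of y0] unfolding f_def by blast
      have oF: "orb f y0 = F" using fy0 unfolding face_def f_def by simp
      have nq: "n = 2*q" using cn oF cardF F_def by simp
      define Y where "Y = map (\<lambda>j. (f ^^ j) y0) [0..<n]"
      have lY: "length Y = n" unfolding Y_def by simp
      have Ynth: "\<And>j. j < n \<Longrightarrow> Y ! j = (f ^^ j) y0" unfolding Y_def by simp
      have sY: "set Y = F" unfolding Y_def using on oF by simp
      have dY: "distinct Y" unfolding Y_def using injn by (simp add: distinct_map)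
      have YD: "set Y \<subseteq> D" using sY FD by simp
      have injYF: "inj_on (orb sigma) F" using injF unfolding F_def .
      have hY: "hd Y = y0" using n0 unfolding Y_def by (simp add: hd_map upt_conv_Cons)
      have stepf: "\<And>t. orb sigma (alpha t) = orb sigma (f t)"
        unfolding f_def using orb_step[OF spm] by simp
      have succY: "successively ?R Y"
        unfolding successively_conv_nth
      proof (intro allI impI)
        fix j assume j: "Suc j < length Y"
        then have "Y ! Suc j = f (Y ! j)" using Ynth lY by simp
        then show "orb sigma (alpha (Y ! j)) = orb sigma (Y ! Suc j)" using stepf by simp
      qed
      have Yne: "Y \<noteq> []" using lY n0 by auto
      have lastY: "last Y = (f ^^ (n - 1)) y0" using Ynth lY n0 Yne by (simp add: last_conv_nth)
      have "f (last Y) = y0"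
      proof -
        have "f ((f ^^ (n - 1)) y0) = (f ^^ Suc (n - 1)) y0" by simp
        also have "Suc (n - 1) = n" using n0 by simp
        finally show ?thesis using lastY fn by simp
      qed
      then have clY: "orb sigma (alpha (last Y)) = orb sigma (hd Y)" using stepf hY by simp
      have dmY: "distinct (map (orb sigma) Y)" using dY injYF sY by (simp add: distinct_map)
      have l2Y: "length Y = 2 \<longrightarrow> Y ! 1 \<noteq> alpha (Y ! 0)" using lY nq qb b2 by simp
      have eY: "distinct (map ?E Y)" using ecyc[OF Yne succY clY dmY l2Y] .
      obtain k where k: "k < n" "Y ! k = y1" using y1F sY lY by (metis in_set_conv_nth)
      have k0: "k \<noteq> 0" using k hY Yne ue y1e by (metis hd_conv_nth)
      define T where "T = take k Y"
      define Dr where "Dr = drop k Y"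
      have YTD: "Y = T @ Dr" unfolding T_def Dr_def by simp
      have Tne: "T \<noteq> []" using k0 Yne unfolding T_def by simp
      have Dne: "Dr \<noteq> []" using k lY unfolding Dr_def by simp
      have hT: "hd T = y0" using hY Tne YTD by (metis hd_append2)
      have hD: "hd Dr = y1" using k lY unfolding Dr_def by (simp add: hd_drop_conv_nth)
      have lD: "last Dr = last Y" using YTD Dne by simp
      have sT: "successively ?R T" and sD: "successively ?R Dr" and lTD: "?R (last T) (hd Dr)"
        using succY Tne Dne unfolding YTD successively_append_iff by blast+
      have disTD: "set T \<inter> set Dr = {}" using dY YTD by (metis distinct_append)
      have TF: "set T \<subseteq> F" and DF: "set Dr \<subseteq> F" using sY YTD by auto
      have y0T: "y0 \<in> set T" using hT Tne hd_in_set by metis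
      have y1D: "y1 \<in> set Dr" using hD Dne hd_in_set by metis
      have dmT: "distinct (map (orb sigma) T)" and dmD: "distinct (map (orb sigma) Dr)"
        using dmY unfolding YTD by auto
      have eT: "distinct (map ?E T)" and eD: "distinct (map ?E Dr)"
        using eY unfolding YTD by auto
      have PD: "set P \<subseteq> D" using PO' OD by blast
      have Psplit: "\<And>a. a \<in> set P \<Longrightarrow> a = x0 \<or> a \<in> set (tl P)"
        using Pne hdP by (metis list.collapse set_ConsD)
      have orbB: "\<And>t. t \<in> F \<Longrightarrow> orb sigma t \<in> B" unfolding B_def by blast
      define c1 where "c1 = P @ Dr"
      have c1cyc: "is_cycle D alpha sigma c1"
        unfolding is_cycle_iff
      proof (intro conjI)
        show "c1 \<noteq> []" unfolding c1_def using Pne by simp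
        show "set c1 \<subseteq> D" unfolding c1_def using PD DF FD by auto
        show "successively ?R c1" unfolding c1_def successively_append_iff
          using sP sD hD y1e e_def by simp
        show "orb sigma (alpha (last c1)) = orb sigma (hd c1)"
          unfolding c1_def using Dne Pne lD clY hY hdP y0u by simp
        show "distinct (map (orb sigma) c1)"
          unfolding c1_def map_append distinct_append
        proof (intro conjI)
          show "distinct (map (orb sigma) P)" using dP .
          show "distinct (map (orb sigma) Dr)" using dmD .
          show "set (map (orb sigma) P) \<inter> set (map (orb sigma) Dr) = {}"
          proof (rule ccontr)
            assume "\<not> ?thesis"
            then obtain a d where a: "a \<in> set P" and d: "d \<in> set Dr" and ad: "orb sigma a = orb sigma d" by auto
            from Psplit[OF a] show False
            proof
              assume "a = x0"
              then have "orb sigma d = orb sigma y0" using ad y0u by simp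
              then have "d = y0" using injYF d DF y0F by (meson inj_onD subsetD)
              then show False using d y0T disTD by blast
            next
              assume "a \<in> set (tl P)"
              then show False using tlP ad orbB d DF by (metis subsetD)
            qed
          qed
        qed
        show "distinct (map ?E c1)"
          unfolding c1_def map_append distinct_append
        proof (intro conjI)
          show "distinct (map ?E P)" using epath[OF Pne sP dP] eP e_def by blast
          show "distinct (map ?E Dr)" using eD .
          show "set (map ?E P) \<inter> set (map ?E Dr) = {}"
          proof (rule ccontr)
            assume "\<not> ?thesis"
            then obtain a d where a: "a \<in> set P" and d: "d \<in> set Dr" and ad: "?E a = ?E d" by auto
            have "a \<in> Od" using a PO' by blast
            moreover have "d \<notin> Od \<and> alpha d \<notin> Od" using O3 d DF by blast
            ultimately show False using edge_eq[OF ad] by blast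
          qed
        qed
      qed
      have c1c: "is_circuit D alpha sigma inn c1"
      proof (rule circ[OF c1cyc], intro ballI)
        fix x assume "x \<in> set c1"
        then have "x \<in> set P \<or> x \<in> set Dr" unfolding c1_def by simp
        then show "inn (alpha x)"
        proof
          assume "x \<in> set P" then show ?thesis using PO' O1 O2 by blast
        next
          assume "x \<in> set Dr" then show ?thesis using DF P4 unfolding F_def by blast
        qed
      qed
      define rP where "rP = rev (map alpha P)"
      have invP: "\<forall>x\<in>set P. alpha (alpha x) = x" using inv PD by blast
      have srP: "successively ?R rP" unfolding rP_def using succ_rev[OF sP invP] .
      have rPne: "rP \<noteq> []" unfolding rP_def using Pne by simp
      have setrP: "set rP = alpha ` set P" unfolding rP_def by simp
      have lrP: "last rP = alpha x0" unfolding rP_def using Pne hdP by (simp add: last_rev hd_map)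
      have hrP: "hd rP = alpha (last P)" unfolding rP_def using Pne by (simp add: hd_rev last_map)
      have morP0: "map (orb sigma) rP = rev (map (\<lambda>x. orb sigma (alpha x)) P)"
        unfolding rP_def rev_map[symmetric] map_map by (simp add: comp_def)
      have morP: "map (orb sigma) rP = rev (tl (map (orb sigma) P) @ [e])"
        unfolding morP0 using ends_list[OF sP Pne] e_def by simp
      have mtl: "tl (map (orb sigma) P) = map (orb sigma) (tl P)" by (simp add: map_tl)
      define c2 where "c2 = rP @ T"
      have c2cyc: "is_cycle D alpha sigma c2"
        unfolding is_cycle_iff
      proof (intro conjI)
        show "c2 \<noteq> []" unfolding c2_def using rPne by simp
        show "set c2 \<subseteq> D" unfolding c2_def using PD aD TF FD setrP by auto
        show "successively ?R c2" unfolding c2_def successively_append_iff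
          using srP sT lrP hT y0u inv x0O OD by auto
        show "orb sigma (alpha (last c2)) = orb sigma (hd c2)"
          unfolding c2_def using Tne rPne lTD hD y1e hrP e_def by simp
        show "distinct (map (orb sigma) c2)"
          unfolding c2_def map_append distinct_append
        proof (intro conjI)
          have "distinct (tl (map (orb sigma) P))" using dP by (simp add: distinct_tl)
          moreover have "e \<notin> set (tl (map (orb sigma) P))"
            using eP by (metis list.set_sel(2) list.simps(8) map_tl set_map tl_Nil)
          ultimately show "distinct (map (orb sigma) rP)" using morP by simp
          show "distinct (map (orb sigma) T)" using dmT .
          show "set (map (orb sigma) rP) \<inter> set (map (orb sigma) T) = {}"
          proof (rule ccontr)
            assume "\<not> ?thesis"
            then obtain g t where g: "g \<in> set (map (orb sigma) rP)" and t: "t \<in> set T"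
              and gt: "g = orb sigma t" by auto
            have "g \<in> set (map (orb sigma) (tl P)) \<or> g = e" using g morP mtl by auto
            then show False
            proof
              assume "g \<in> set (map (orb sigma) (tl P))"
              then obtain a where "a \<in> set (tl P)" "g = orb sigma a" by auto
              then show False using tlP gt orbB t TF by (metis subsetD)
            next
              assume "g = e"
              then have "orb sigma t = orb sigma y1" using gt y1e by simp
              then have "t = y1" using injYF t TF y1F by (meson inj_onD subsetD)
              then show False using t y1D disTD by blast
            qed
          qed
        qed
        show "distinct (map ?E c2)"
          unfolding c2_def map_append distinct_append
        proof (intro conjI)
          have "map ?E rP = rev (map ?E P)"
            unfolding rP_def using map_edge_rev[OF invP] .
          then show "distinct (map ?E rP)" using epath[OF Pne sP dP] eP e_def by simp
          show "distinct (map ?E T)" using eT .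
          show "set (map ?E rP) \<inter> set (map ?E T) = {}"
          proof (rule ccontr)
            assume "\<not> ?thesis"
            then obtain g where g1: "g \<in> set (map ?E rP)" and g2: "g \<in> set (map ?E T)" by blast
            from g1 obtain a where a: "a \<in> set rP" and ga: "g = ?E a" unfolding set_map by (rule imageE)
            from g2 obtain d where d: "d \<in> set T" and gd: "g = ?E d" unfolding set_map by (rule imageE)
            have ad: "?E a = ?E d" using ga gd by simp
            obtain p where p: "p \<in> set P" "a = alpha p" using a setrP by blast
            have "p \<in> Od" using p PO' by blast
            then have "a \<in> Od" using p O1 by blast
            moreover have "d \<notin> Od \<and> alpha d \<notin> Od" using O3 d TF by blast
            ultimately show False using edge_eq[OF ad] by blast
          qed
        qed
      qed
      have c2c: "is_circuit D alpha sigma inn c2"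
      proof (rule circ[OF c2cyc], intro ballI)
        fix x assume "x \<in> set c2"
        then have "x \<in> set rP \<or> x \<in> set T" unfolding c2_def by simp
        then show "inn (alpha x)"
        proof
          assume "x \<in> set rP"
          then obtain p where "p \<in> set P" "x = alpha p" using setrP by blast
          then show ?thesis using PO' O2 invP by auto
        next
          assume "x \<in> set T" then show ?thesis using TF P4 unfolding F_def by blast
        qed
      qed
      have setc1: "set c1 = set P \<union> set Dr" unfolding c1_def by simp
      have setc2: "set c2 = alpha ` set P \<union> set T" unfolding c2_def using setrP by simp
      show False
      proof (rule two_circuits[OF base rtD MO c1c c2c])
        fix z' assume z'D: "z' \<in> D" and Ez: "{z', alpha z'} \<in> ?E ` set c1 \<union> ?E ` set c2"
        show "face alpha sigma (alpha z') \<in> right_faces D alpha sigma c1 \<union> right_faces D alpha sigma c2"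
        proof (cases "alpha z' \<in> set c1 \<union> set c2")
          case True
          then show ?thesis
            using rf_start[of "alpha z'" c1 alpha sigma D] rf_start[of "alpha z'" c2 alpha sigma D] by blast
        next
          case notin: False
          obtain y where y: "y \<in> set c1 \<union> set c2" "{z', alpha z'} = {y, alpha y}" using Ez by blast
          have zin: "z' \<in> set c1 \<union> set c2" using edge_eq[OF y(2)] y(1) notin by metis
          have zP: "z' \<notin> set P" using notin setc2 by blast
          have zaP: "z' \<notin> alpha ` set P"
          proof
            assume "z' \<in> alpha ` set P"
            then obtain p where "p \<in> set P" "z' = alpha p" by blast
            then show False using notin invP setc1 by auto
          qed
          have zDT: "z' \<in> set Dr \<or> z' \<in> set T" using zin zP zaP setc1 setc2 by blast
          then show ?thesis
          proof
            assume zd: "z' \<in> set Dr"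
            then have zF: "z' \<in> F" using DF by blast
            have f1: "face alpha sigma z' = face alpha sigma y0" using faceF zF y0F by simp
            have f2: "face alpha sigma z' \<in> right_faces D alpha sigma c2"
              using f1 rf_start[of y0 c2 alpha sigma D] y0T unfolding c2_def by simp
            have "{z', alpha z'} \<notin> ?E ` set c2"
            proof
              assume "{z', alpha z'} \<in> ?E ` set c2"
              then obtain y' where y': "y' \<in> set c2" "{z', alpha z'} = {y', alpha y'}" by blast
              from edge_eq[OF y'(2)] have "z' \<in> set c2" using y'(1) notin by (metis UnCI)
              then have "z' \<in> alpha ` set P \<or> z' \<in> set T" using setc2 by blast
              then show False using zaP zd disTD by blast
            qed
            then have "face alpha sigma (alpha z') \<in> right_faces D alpha sigma c2"
              using rf_step[OF f2 z'D] by blast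
            then show ?thesis by blast
          next
            assume zt: "z' \<in> set T"
            then have zF: "z' \<in> F" using TF by blast
            have f1: "face alpha sigma z' = face alpha sigma y1" using faceF zF y1F by simp
            have f2: "face alpha sigma z' \<in> right_faces D alpha sigma c1"
              using f1 rf_start[of y1 c1 alpha sigma D] y1D unfolding c1_def by simp
            have "{z', alpha z'} \<notin> ?E ` set c1"
            proof
              assume "{z', alpha z'} \<in> ?E ` set c1"
              then obtain y' where y': "y' \<in> set c1" "{z', alpha z'} = {y', alpha y'}" by blast
              from edge_eq[OF y'(2)] have "z' \<in> set c1" using y'(1) notin by (metis UnCI)
              then have "z' \<in> set P \<or> z' \<in> set Dr" using setc1 by blast
              then show False using zP zt disTD by blast
            qed
            then have "face alpha sigma (alpha z') \<in> right_faces D alpha sigma c1"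
              using rf_step[OF f2 z'D] by blast
            then show ?thesis by blast
          qed
        qed
      qed
    qed
  qed
qed


theorem proposition23:
  fixes b q :: nat
  assumes "2 \<le> b" and "b \<le> q"
  shows "(\<forall>(D :: 'a set) alpha sigma black (w :: 'a \<Rightarrow> nat).
            branching_mobile (2 * q) (2 * b) D alpha sigma black w \<longrightarrow>
            (\<forall>x\<in>D. alpha x \<noteq> x \<longrightarrow> even (w x)))
       \<and> (\<forall>(D :: 'b set) alpha sigma bd rt inn (w :: 'b \<Rightarrow> nat).
            annular_angulation (2 * q) (2 * b) D alpha sigma bd rt \<and>
            has_girth D alpha sigma (2 * b) \<and>
            pseudo_orientation (2 * b) D alpha sigma bd inn w \<and>
            minimal_orientation D alpha sigma rt inn \<longrightarrow>
            (\<forall>x\<in>D. even (w x)))"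
proof (intro conjI allI impI ballI)
  fix D :: "'a set" and alpha sigma black and w :: "'a \<Rightarrow> nat" and x
  assume "branching_mobile (2 * q) (2 * b) D alpha sigma black w" "x \<in> D" "alpha x \<noteq> x"
  then show "even (w x)" by (rule part1[OF assms(1)])
next
  fix D :: "'b set" and alpha sigma bd rt inn and w :: "'b \<Rightarrow> nat" and x
  assume "annular_angulation (2 * q) (2 * b) D alpha sigma bd rt \<and>
            has_girth D alpha sigma (2 * b) \<and>
            pseudo_orientation (2 * b) D alpha sigma bd inn w \<and>
            minimal_orientation D alpha sigma rt inn" (is "?A \<and> ?G \<and> ?P \<and> ?M") and xD: "x \<in> D"
  then have A: ?A and P: ?P and M: ?M by blast+
  show "even (w x)" by (rule part2[OF assms(1) assms(2) A P M xD])
qed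

end
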